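(* Let $s\geq 3$ and let $G\in\mathcal{G}_{3}(s)$. Then $G$ is a maximal $3$-$\gamma_{c}$-vertex critical graph.
   Context: All graphs are finite and simple. A set $D\subseteq V(G)$ is a connected dominating set of $G$ if every vertex of $G$ is in $D$ or adjacent to a vertex of $D$, and $G[D]$ is connected; $\gamma_{c}(G)$ is the minimum cardinality of such a set. $G$ is $k$-$\gamma_{c}$-edge critical if $\gamma_{c}(G)=k$ and $\gamma_{c}(G+uv)<k$ for every pair of non-adjacent vertices $u,v$. A $2$-connected graph $G$ is $k$-$\gamma_{c}$-vertex critical if $\gamma_{c}(G)=k$ and $\gamma_{c}(G-v)<k$ for every $v\in V(G)$. $G$ is maximal $k$-$\gamma_{c}$-vertex critical if it is both $k$-$\gamma_{c}$-edge critical and $k$-$\gamma_{c}$-vertex critical. For $s\geq 3$, $\mathcal{G}_{3}(s)$ is the class of graphs (unique up to isomorphism) with vertex set $R\cup T\cup W\cup Z$, where $R=\{r_1,\dots,r_s\}$, $T=\{t_1,\dots,t_s\}$, $W=\{w_1,\dots,w_s\}$, $Z=\{z_1,\dots,z_s\}$ are pairwise disjoint, and whose edges are exactly: for each $1\leq i\leq s$, $r_i$ is joined to every vertex of $(T\cup W)\setminus\{t_i\}$, $t_i$ is joined to every vertex of $(W\cup Z)\setminus\{w_i\}$, and $w_i$ is joined to every vertex of $Z\setminus\{z_i\}$; in addition $R$ and $Z$ each induce a clique. (No other edges; in particular $T$ and $W$ are independent sets.) *)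

theory Defs
  imports Main
begin

definition simple_graph :: "'a set \<Rightarrow> ('a \<Rightarrow> 'a \<Rightarrow> bool) \<Rightarrow> bool" where
  "simple_graph V E \<longleftrightarrow> finite V \<and> (\<forall>x y. E x y \<longrightarrow> x \<in> V \<and> y \<in> V \<and> x \<noteq> y \<and> E y x)"

definition connected_set :: "('a \<Rightarrow> 'a \<Rightarrow> bool) \<Rightarrow> 'a set \<Rightarrow> bool" where
  "connected_set E S \<longleftrightarrow>
     (\<forall>x\<in>S. \<forall>y\<in>S. (\<lambda>a b. a \<in> S \<and> b \<in> S \<and> E a b)\<^sup>*\<^sup>* x y)"

definition connected_graph :: "'a set \<Rightarrow> ('a \<Rightarrow> 'a \<Rightarrow> bool) \<Rightarrow> bool" where
  "connected_graph V E \<longleftrightarrow> V \<noteq> {} \<and> connected_set E V"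

definition dominating_set :: "'a set \<Rightarrow> ('a \<Rightarrow> 'a \<Rightarrow> bool) \<Rightarrow> 'a set \<Rightarrow> bool" where
  "dominating_set V E D \<longleftrightarrow> D \<subseteq> V \<and> (\<forall>x\<in>V. x \<in> D \<or> (\<exists>y\<in>D. E x y))"

definition connected_dominating_set :: "'a set \<Rightarrow> ('a \<Rightarrow> 'a \<Rightarrow> bool) \<Rightarrow> 'a set \<Rightarrow> bool" where
  "connected_dominating_set V E D \<longleftrightarrow> dominating_set V E D \<and> connected_set E D"

definition gamma_c :: "'a set \<Rightarrow> ('a \<Rightarrow> 'a \<Rightarrow> bool) \<Rightarrow> nat" where
  "gamma_c V E = (LEAST n. \<exists>D. connected_dominating_set V E D \<and> card D = n)"

definition del_vertex_edges :: "('a \<Rightarrow> 'a \<Rightarrow> bool) \<Rightarrow> 'a \<Rightarrow> ('a \<Rightarrow> 'a \<Rightarrow> bool)" where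
  "del_vertex_edges E v = (\<lambda>x y. E x y \<and> x \<noteq> v \<and> y \<noteq> v)"

definition add_edge :: "('a \<Rightarrow> 'a \<Rightarrow> bool) \<Rightarrow> 'a \<Rightarrow> 'a \<Rightarrow> ('a \<Rightarrow> 'a \<Rightarrow> bool)" where
  "add_edge E u v = (\<lambda>x y. E x y \<or> (x = u \<and> y = v) \<or> (x = v \<and> y = u))"

definition two_connected :: "'a set \<Rightarrow> ('a \<Rightarrow> 'a \<Rightarrow> bool) \<Rightarrow> bool" where
  "two_connected V E \<longleftrightarrow> card V \<ge> 3 \<and> connected_graph V E \<and>
     (\<forall>v\<in>V. connected_graph (V - {v}) (del_vertex_edges E v))"

definition edge_critical :: "nat \<Rightarrow> 'a set \<Rightarrow> ('a \<Rightarrow> 'a \<Rightarrow> bool) \<Rightarrow> bool" where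
  "edge_critical k V E \<longleftrightarrow> gamma_c V E = k \<and>
     (\<forall>u\<in>V. \<forall>v\<in>V. u \<noteq> v \<and> \<not> E u v \<longrightarrow> gamma_c V (add_edge E u v) < k)"

definition vertex_critical :: "nat \<Rightarrow> 'a set \<Rightarrow> ('a \<Rightarrow> 'a \<Rightarrow> bool) \<Rightarrow> bool" where
  "vertex_critical k V E \<longleftrightarrow> two_connected V E \<and> gamma_c V E = k \<and>
     (\<forall>v\<in>V. gamma_c (V - {v}) (del_vertex_edges E v) < k)"

definition maximal_vertex_critical :: "nat \<Rightarrow> 'a set \<Rightarrow> ('a \<Rightarrow> 'a \<Rightarrow> bool) \<Rightarrow> bool" where
  "maximal_vertex_critical k V E \<longleftrightarrow> edge_critical k V E \<and> vertex_critical k V E"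

definition G3_base :: "nat \<Rightarrow> (nat \<Rightarrow> 'a) \<Rightarrow> (nat \<Rightarrow> 'a) \<Rightarrow> (nat \<Rightarrow> 'a) \<Rightarrow> (nat \<Rightarrow> 'a) \<Rightarrow> 'a \<Rightarrow> 'a \<Rightarrow> bool" where
  "G3_base s r t w z x y \<longleftrightarrow> (\<exists>i\<in>{1..s}. \<exists>j\<in>{1..s}.
      (x = r i \<and> y = r j \<and> i \<noteq> j)
    \<or> (x = r i \<and> y = t j \<and> i \<noteq> j)
    \<or> (x = r i \<and> y = w j)
    \<or> (x = t i \<and> y = w j \<and> i \<noteq> j)
    \<or> (x = t i \<and> y = z j)
    \<or> (x = w i \<and> y = z j \<and> i \<noteq> j)
    \<or> (x = z i \<and> y = z j \<and> i \<noteq> j))"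

definition in_G3 :: "nat \<Rightarrow> 'a set \<Rightarrow> ('a \<Rightarrow> 'a \<Rightarrow> bool) \<Rightarrow> bool" where
  "in_G3 s V E \<longleftrightarrow> (\<exists>r t w z.
     inj_on r {1..s} \<and> inj_on t {1..s} \<and> inj_on w {1..s} \<and> inj_on z {1..s} \<and>
     r ` {1..s} \<inter> t ` {1..s} = {} \<and> r ` {1..s} \<inter> w ` {1..s} = {} \<and>
     r ` {1..s} \<inter> z ` {1..s} = {} \<and> t ` {1..s} \<inter> w ` {1..s} = {} \<and>
     t ` {1..s} \<inter> z ` {1..s} = {} \<and> w ` {1..s} \<inter> z ` {1..s} = {} \<and>
     V = r ` {1..s} \<union> t ` {1..s} \<union> w ` {1..s} \<union> z ` {1..s} \<and>
     (\<forall>x y. E x y \<longleftrightarrow> G3_base s r t w z x y \<or> G3_base s r t w z y x))"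

end

theory Submission
  imports Defs
begin

lemma gamma_le: "connected_dominating_set V E D \<Longrightarrow> gamma_c V E \<le> card D"
  unfolding gamma_c_def by (rule Least_le) blast

lemma gamma_eq: "connected_dominating_set V E D \<Longrightarrow> card D = k \<Longrightarrow>
   (\<And>D. connected_dominating_set V E D \<Longrightarrow> k \<le> card D) \<Longrightarrow> gamma_c V E = k"
  unfolding gamma_c_def by (rule Least_equality) auto

lemma hub_conn:
  assumes c: "c \<in> S" and h: "\<And>x. x \<in> S \<Longrightarrow> x = c \<or> E x c \<or> (\<exists>y\<in>S. E x y \<and> E y c)"
    and sym: "\<And>x y. E x y \<Longrightarrow> E y x"
  shows "connected_set E S"
proof -
  let ?P = "\<lambda>a b. a \<in> S \<and> b \<in> S \<and> E a b"
  have to: "?P\<^sup>*\<^sup>* x c \<and> ?P\<^sup>*\<^sup>* c x" if x: "x \<in> S" for x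
  proof -
    consider "x = c" | "E x c" | y where "y \<in> S" "E x y" "E y c" using h[OF x] by blast
    then show ?thesis
    proof cases
      case 1 then show ?thesis by simp
    next
      case 2 then show ?thesis using x c sym by (metis (mono_tags, lifting) r_into_rtranclp)
    next
      case 3
      have a: "?P x y" "?P y c" "?P c y" "?P y x" using 3 x c sym by auto
      have "?P\<^sup>*\<^sup>* x c"
        by (rule converse_rtranclp_into_rtranclp[of ?P x y]) (use a in auto)
      moreover have "?P\<^sup>*\<^sup>* c x"
        by (rule converse_rtranclp_into_rtranclp[of ?P c y]) (use a in auto)
      ultimately show ?thesis by blast
    qed
  qed
  show ?thesis unfolding connected_set_def
  proof (intro ballI)
    fix x y assume "x \<in> S" "y \<in> S"
    then have "?P\<^sup>*\<^sup>* x c" "?P\<^sup>*\<^sup>* c y" using to by blast+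
    then show "?P\<^sup>*\<^sup>* x y" by (rule rtranclp_trans)
  qed
qed

lemma conn2: "E a b \<Longrightarrow> (\<And>x y. E x y \<Longrightarrow> E y x) \<Longrightarrow> connected_set E {a, b}"
  by (rule hub_conn[of b]) auto

lemma cds2: "a \<in> V \<Longrightarrow> b \<in> V \<Longrightarrow> E a b \<Longrightarrow> (\<And>x y. E x y \<Longrightarrow> E y x) \<Longrightarrow>
   (\<And>x. x \<in> V \<Longrightarrow> x = a \<or> x = b \<or> E x a \<or> E x b) \<Longrightarrow> connected_dominating_set V E {a, b}"
  unfolding connected_dominating_set_def dominating_set_def using conn2[of E a b] by blast

lemma two_conn_edge:
  assumes "connected_set E {x, y}" "x \<noteq> y" "\<And>a. \<not> E a a"
  shows "E x y"
proof -
  let ?P = "\<lambda>a b. a \<in> {x, y} \<and> b \<in> {x, y} \<and> E a b"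
  have "?P\<^sup>*\<^sup>* x y" using assms(1) unfolding connected_set_def by blast
  have gen: "?P\<^sup>*\<^sup>* a b \<Longrightarrow> a = x \<Longrightarrow> b = x \<or> E x b" for a b
  proof (induction rule: rtranclp_induct)
    case base then show ?case by simp
  next
    case (step u b)
    then have u: "u = x \<or> E x u" and ub: "u \<in> {x, y}" "b \<in> {x, y}" "E u b" by auto
    show ?case
    proof (cases "u = x")
      case True then show ?thesis using ub by simp
    next
      case False
      then have "u = y" using ub by simp
      then have "b \<noteq> y" using ub assms(3) by blast
      then show ?thesis using ub by simp
    qed
  qed
  have "y = x \<or> E x y" by (rule gen[OF \<open>?P\<^sup>*\<^sup>* x y\<close> refl])
  then show ?thesis using assms(2) by simp
qed
locale g3 =
  fixes s :: nat and V :: "'a set" and E :: "'a \<Rightarrow> 'a \<Rightarrow> bool" and r t w z :: "nat \<Rightarrow> 'a"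
  assumes s3: "s \<ge> 3"
  and ir: "inj_on r {1..s}" and it: "inj_on t {1..s}" and iw: "inj_on w {1..s}" and iz: "inj_on z {1..s}"
  and d1: "r ` {1..s} \<inter> t ` {1..s} = {}" and d2: "r ` {1..s} \<inter> w ` {1..s} = {}"
  and d3: "r ` {1..s} \<inter> z ` {1..s} = {}" and d4: "t ` {1..s} \<inter> w ` {1..s} = {}"
  and d5: "t ` {1..s} \<inter> z ` {1..s} = {}" and d6: "w ` {1..s} \<inter> z ` {1..s} = {}"
  and Vdef: "V = r ` {1..s} \<union> t ` {1..s} \<union> w ` {1..s} \<union> z ` {1..s}"
  and Eiff: "\<And>x y. E x y \<longleftrightarrow> G3_base s r t w z x y \<or> G3_base s r t w z y x"
begin

abbreviation "I \<equiv> {1..s}"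

lemma eqs[simp]:
  assumes "i \<in> I" "j \<in> I"
  shows "r i = r j \<longleftrightarrow> i = j" "t i = t j \<longleftrightarrow> i = j" "w i = w j \<longleftrightarrow> i = j" "z i = z j \<longleftrightarrow> i = j"
  using assms inj_on_eq_iff[OF ir] inj_on_eq_iff[OF it] inj_on_eq_iff[OF iw] inj_on_eq_iff[OF iz] by auto

lemma neqs[simp]:
  assumes "i \<in> I" "j \<in> I"
  shows "r i \<noteq> t j" "r i \<noteq> w j" "r i \<noteq> z j" "t i \<noteq> w j" "t i \<noteq> z j" "w i \<noteq> z j"
   "t i \<noteq> r j" "w i \<noteq> r j" "z i \<noteq> r j" "w i \<noteq> t j" "z i \<noteq> t j" "z i \<noteq> w j"
proof -
  have a: "r i \<in> r ` I" "t i \<in> t ` I" "w i \<in> w ` I" "z i \<in> z ` I"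
     "r j \<in> r ` I" "t j \<in> t ` I" "w j \<in> w ` I" "z j \<in> z ` I" using assms by auto
  show "r i \<noteq> t j" using d1 a(1) a(6) unfolding disjoint_iff by metis
  show "r i \<noteq> w j" using d2 a(1) a(7) unfolding disjoint_iff by metis
  show "r i \<noteq> z j" using d3 a(1) a(8) unfolding disjoint_iff by metis
  show "t i \<noteq> w j" using d4 a(2) a(7) unfolding disjoint_iff by metis
  show "t i \<noteq> z j" using d5 a(2) a(8) unfolding disjoint_iff by metis
  show "w i \<noteq> z j" using d6 a(3) a(8) unfolding disjoint_iff by metis
  show "t i \<noteq> r j" using d1 a(2) a(5) unfolding disjoint_iff by metis
  show "w i \<noteq> r j" using d2 a(3) a(5) unfolding disjoint_iff by metis
  show "z i \<noteq> r j" using d3 a(4) a(5) unfolding disjoint_iff by metis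
  show "w i \<noteq> t j" using d4 a(3) a(6) unfolding disjoint_iff by metis
  show "z i \<noteq> t j" using d5 a(4) a(6) unfolding disjoint_iff by metis
  show "z i \<noteq> w j" using d6 a(4) a(7) unfolding disjoint_iff by metis
qed

lemma adj0[simp]: "i \<in> I \<Longrightarrow> j \<in> I \<Longrightarrow> E (r i) (r j) \<longleftrightarrow> i \<noteq> j"
  unfolding Eiff G3_base_def by auto

lemma adj1[simp]: "i \<in> I \<Longrightarrow> j \<in> I \<Longrightarrow> E (r i) (t j) \<longleftrightarrow> i \<noteq> j"
  unfolding Eiff G3_base_def by auto

lemma adj2[simp]: "i \<in> I \<Longrightarrow> j \<in> I \<Longrightarrow> E (r i) (w j)"
  unfolding Eiff G3_base_def by auto

lemma adj3[simp]: "i \<in> I \<Longrightarrow> j \<in> I \<Longrightarrow> \<not> E (r i) (z j)"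
  unfolding Eiff G3_base_def by auto

lemma adj4[simp]: "i \<in> I \<Longrightarrow> j \<in> I \<Longrightarrow> E (t i) (r j) \<longleftrightarrow> i \<noteq> j"
  unfolding Eiff G3_base_def by auto

lemma adj5[simp]: "i \<in> I \<Longrightarrow> j \<in> I \<Longrightarrow> \<not> E (t i) (t j)"
  unfolding Eiff G3_base_def by auto

lemma adj6[simp]: "i \<in> I \<Longrightarrow> j \<in> I \<Longrightarrow> E (t i) (w j) \<longleftrightarrow> i \<noteq> j"
  unfolding Eiff G3_base_def by auto

lemma adj7[simp]: "i \<in> I \<Longrightarrow> j \<in> I \<Longrightarrow> E (t i) (z j)"
  unfolding Eiff G3_base_def by auto

lemma adj8[simp]: "i \<in> I \<Longrightarrow> j \<in> I \<Longrightarrow> E (w i) (r j)"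
  unfolding Eiff G3_base_def by auto

lemma adj9[simp]: "i \<in> I \<Longrightarrow> j \<in> I \<Longrightarrow> E (w i) (t j) \<longleftrightarrow> i \<noteq> j"
  unfolding Eiff G3_base_def by auto

lemma adj10[simp]: "i \<in> I \<Longrightarrow> j \<in> I \<Longrightarrow> \<not> E (w i) (w j)"
  unfolding Eiff G3_base_def by auto

lemma adj11[simp]: "i \<in> I \<Longrightarrow> j \<in> I \<Longrightarrow> E (w i) (z j) \<longleftrightarrow> i \<noteq> j"
  unfolding Eiff G3_base_def by auto

lemma adj12[simp]: "i \<in> I \<Longrightarrow> j \<in> I \<Longrightarrow> \<not> E (z i) (r j)"
  unfolding Eiff G3_base_def by auto

lemma adj13[simp]: "i \<in> I \<Longrightarrow> j \<in> I \<Longrightarrow> E (z i) (t j)"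
  unfolding Eiff G3_base_def by auto

lemma adj14[simp]: "i \<in> I \<Longrightarrow> j \<in> I \<Longrightarrow> E (z i) (w j) \<longleftrightarrow> i \<noteq> j"
  unfolding Eiff G3_base_def by auto

lemma adj15[simp]: "i \<in> I \<Longrightarrow> j \<in> I \<Longrightarrow> E (z i) (z j) \<longleftrightarrow> i \<noteq> j"
  unfolding Eiff G3_base_def by auto

lemma V_cases:
  assumes "x \<in> V"
  obtains i where "i \<in> I" "x \<in> {r i, t i, w i, z i}"
  using assms unfolding Vdef by blast

lemma inV[simp]: "i \<in> I \<Longrightarrow> r i \<in> V" "i \<in> I \<Longrightarrow> t i \<in> V" "i \<in> I \<Longrightarrow> w i \<in> V" "i \<in> I \<Longrightarrow> z i \<in> V"
  unfolding Vdef by auto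

lemma EV: "E x y \<Longrightarrow> x \<in> V \<and> y \<in> V"
  unfolding Eiff G3_base_def Vdef by auto

lemma Esym: "E x y \<Longrightarrow> E y x" using Eiff by blast

lemma Eirr: "\<not> E x x"
proof
  assume "E x x"
  then have "x \<in> V" using EV by blast
  then obtain i where "i \<in> I" "x \<in> {r i, t i, w i, z i}" by (rule V_cases)
  then show False using \<open>E x x\<close> by auto
qed

lemma avoid:
  assumes "p \<in> I" "v \<in> V"
  obtains c where "c \<in> I" "c \<noteq> p" "v \<notin> {r c, t c, w c, z c}"
proof -
  obtain a where a: "a \<in> I" "v \<in> {r a, t a, w a, z a}" using assms(2) by (rule V_cases)
  have c2: "card {p, a} \<le> 2" by (simp add: card_insert_if)
  have "card I - card {p, a} \<le> card (I - {p, a})" by (rule diff_card_le_card_Diff) simp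
  then have "card (I - {p, a}) \<ge> 1" using s3 c2 by simp
  then have "I - {p, a} \<noteq> {}" by (metis card.empty not_one_le_zero)
  then obtain c where "c \<in> I" "c \<noteq> p" "c \<noteq> a" by blast
  then show ?thesis using that a assms by auto
qed

lemma one: "1 \<in> I" "2 \<in> I" "3 \<in> I" using s3 by auto

lemma finV: "finite V" unfolding Vdef by simp

lemma nbr: "x \<in> V \<Longrightarrow> \<exists>y. E x y"
  apply (erule V_cases)
  using one apply (elim insertE; simp)
     apply (rule exI[of _ "w 1"], simp)
    apply (rule exI[of _ "z 1"], simp)
   apply (rule exI[of _ "r 1"], simp)
  apply (rule exI[of _ "t 1"], simp)
  done

lemma no_dom2:
  assumes "i \<in> I" "j \<in> I" "x \<in> {r i, t i, w i, z i}" "y \<in> {r j, t j, w j, z j}" "E x y"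
  shows "\<not> (\<forall>v\<in>{r 1, z 1, r i, t i, w i, z i, r j, t j, w j, z j}. v = x \<or> v = y \<or> E v x \<or> E v y)"
  using assms(3,4) apply (elim insertE emptyE) using assms(1,2,5) one by simp_all


lemma key:
  assumes "x \<in> V" "y \<in> V" "E x y"
  shows "\<exists>v\<in>V. v \<noteq> x \<and> v \<noteq> y \<and> \<not> E v x \<and> \<not> E v y"
proof -
  obtain i where i: "i \<in> I" "x \<in> {r i, t i, w i, z i}" using assms(1) by (rule V_cases)
  obtain j where j: "j \<in> I" "y \<in> {r j, t j, w j, z j}" using assms(2) by (rule V_cases)
  have "\<not> (\<forall>v\<in>{r 1, z 1, r i, t i, w i, z i, r j, t j, w j, z j}. v = x \<or> v = y \<or> E v x \<or> E v y)"
    by (rule no_dom2[OF i(1) j(1) i(2) j(2) assms(3)])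
  then obtain v where v: "v \<in> {r 1, z 1, r i, t i, w i, z i, r j, t j, w j, z j}"
    and nv: "\<not> (v = x \<or> v = y \<or> E v x \<or> E v y)" by blast
  have "{r 1, z 1, r i, t i, w i, z i, r j, t j, w j, z j} \<subseteq> V" using i(1) j(1) one by simp
  then have "v \<in> V" using v by blast
  then show ?thesis using nv by blast
qed

lemma lower:
  assumes cds: "connected_dominating_set V E D"
  shows "3 \<le> card D"
proof (rule ccontr)
  assume "\<not> 3 \<le> card D"
  then have c: "card D < 3" by simp
  have DV: "D \<subseteq> V" and dom: "\<forall>x\<in>V. x \<in> D \<or> (\<exists>y\<in>D. E x y)" and conn: "connected_set E D"
    using cds unfolding connected_dominating_set_def dominating_set_def by auto
  have fin: "finite D" using DV finV finite_subset by blast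
  consider "card D = 0" | "card D = 1" | "card D = 2" using c by linarith
  then show False
  proof cases
    case 1 then have "D = {}" using fin by simp
    then show False using dom inV(1)[OF one(1)] by blast
  next
    case 2 then obtain x where D: "D = {x}" by (rule card_1_singletonE)
    then have xV: "x \<in> V" using DV by auto
    obtain y where xy: "E x y" using nbr[OF xV] by blast
    then have yV: "y \<in> V" using EV by blast
    obtain v where "v \<in> V" "v \<noteq> x" "\<not> E v x" using key[OF xV yV xy] by blast
    then show False using dom D by blast
  next
    case 3 then obtain x y where D: "D = {x, y}" "x \<noteq> y" by (auto simp: card_2_iff)
    have xy: "E x y" using two_conn_edge[of E x y] conn D Eirr by blast
    have xV: "x \<in> V" "y \<in> V" using D DV by auto
    obtain v where "v \<in> V" "v \<noteq> x" "v \<noteq> y" "\<not> E v x" "\<not> E v y" using key[OF xV xy] by blast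
    then show False using dom D by blast
  qed
qed

lemma upper: "connected_dominating_set V E {r 1, w 2, z 1}"
  unfolding connected_dominating_set_def dominating_set_def
proof (intro conjI ballI)
  show "{r 1, w 2, z 1} \<subseteq> V" using one by simp
next
  fix x assume "x \<in> V"
  then show "x \<in> {r 1, w 2, z 1} \<or> (\<exists>y\<in>{r 1, w 2, z 1}. E x y)"
    apply (rule V_cases)
    apply (elim insertE emptyE)
    using one by simp_all
next
  show "connected_set E {r 1, w 2, z 1}"
    by (rule hub_conn[of "w 2"]) (use one Esym in auto)
qed

lemma card_upper: "card {r 1, w 2, z 1} = 3" using one by simp

lemma gamma3: "gamma_c V E = 3"
  by (rule gamma_eq[OF upper card_upper lower])

lemma Esym': "\<And>x y. del_vertex_edges E v x y \<Longrightarrow> del_vertex_edges E v y x"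
  unfolding del_vertex_edges_def using Esym by blast

lemma vc:
  assumes vV: "v \<in> V"
  shows "gamma_c (V - {v}) (del_vertex_edges E v) < 3"
proof -
  let ?E = "del_vertex_edges E v"
  have suff: "gamma_c (V - {v}) ?E < 3"
    if dm: "\<And>x. x \<in> V \<Longrightarrow> x \<noteq> v \<Longrightarrow> x = a \<or> x = b \<or> E x a \<or> E x b"
     and ab: "a \<in> V" "b \<in> V" "a \<noteq> v" "b \<noteq> v" "E a b" "a \<noteq> b" for a b
  proof -
    have "connected_dominating_set (V - {v}) ?E {a, b}"
      by (rule cds2) (use ab dm Esym' in \<open>auto simp: del_vertex_edges_def\<close>)
    then have "gamma_c (V - {v}) ?E \<le> card {a, b}" by (rule gamma_le)
    then show ?thesis using ab by simp
  qed
  obtain i where i: "i \<in> I" "v \<in> {r i, t i, w i, z i}" using vV by (rule V_cases)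
  obtain j where j: "j \<in> I" "j \<noteq> i" using avoid[OF i(1) vV] by blast
  from i(2) show ?thesis
  proof (elim insertE emptyE)
    assume v: "v = r i"
    show ?thesis
      apply (rule suff[of "t i" "z j"])
      apply (erule V_cases, elim insertE emptyE)
      using i j v by simp_all
  next
    assume v: "v = t i"
    show ?thesis
      apply (rule suff[of "r i" "t j"])
      apply (erule V_cases, elim insertE emptyE)
      using i j v by simp_all
  next
    assume v: "v = w i"
    show ?thesis
      apply (rule suff[of "w j" "z i"])
      apply (erule V_cases, elim insertE emptyE)
      using i j v by simp_all
  next
    assume v: "v = z i"
    show ?thesis
      apply (rule suff[of "r j" "w i"])
      apply (erule V_cases, elim insertE emptyE)
      using i j v by simp_all
  qed
qed


lemma ec:
  assumes uV: "u \<in> V" and vV: "v \<in> V" and uv: "u \<noteq> v" and nE: "\<not> E u v"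
  shows "gamma_c V (add_edge E u v) < 3"
proof -
  let ?E = "add_edge E u v"
  have suff: "gamma_c V ?E < 3"
    if dm: "\<And>x. x \<in> V \<Longrightarrow> x = a \<or> x = b \<or> ?E x a \<or> ?E x b"
     and ab: "a \<in> V" "b \<in> V" "?E a b" "a \<noteq> b" for a b
  proof -
    have "connected_dominating_set V ?E {a, b}"
      by (rule cds2) (use ab dm Esym in \<open>auto simp: add_edge_def\<close>)
    then have "gamma_c V ?E \<le> card {a, b}" by (rule gamma_le)
    then show ?thesis using ab by simp
  qed
  obtain i where i: "i \<in> I" "u \<in> {r i, t i, w i, z i}" using uV by (rule V_cases)
  obtain j where j: "j \<in> I" "v \<in> {r j, t j, w j, z j}" using vV by (rule V_cases)
  obtain k where k: "k \<in> I" "k \<noteq> i" "t j \<notin> {r k, t k, w k, z k}" using avoid[OF i(1) inV(2)[OF j(1)]] by blast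
  have kj: "k \<noteq> j" using k j by auto
  from i(2) show ?thesis
  proof (elim insertE emptyE)
    assume u: "u = r i"
    from j(2) show ?thesis
    proof (elim insertE emptyE)
      assume v: "v = r j"
      show ?thesis using u v i(1) j(1) uv nE by simp
    next
      assume v: "v = t j"
      show ?thesis
        apply (rule suff[of "r i" "t i"])
            apply (erule V_cases, elim insertE emptyE)
        using u v i(1) j(1) k(1,2) kj uv nE by (simp_all add: add_edge_def)
    next
      assume v: "v = w j"
      show ?thesis using u v i(1) j(1) uv nE by simp
    next
      assume v: "v = z j"
      show ?thesis
        apply (rule suff[of "r i" "z j"])
            apply (erule V_cases, elim insertE emptyE)
        using u v i(1) j(1) k(1,2) kj uv nE by (simp_all add: add_edge_def)
    qed
  next
    assume u: "u = t i"
    from j(2) show ?thesis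
    proof (elim insertE emptyE)
      assume v: "v = r j"
      show ?thesis
        apply (rule suff[of "r j" "t j"])
            apply (erule V_cases, elim insertE emptyE)
        using u v i(1) j(1) k(1,2) kj uv nE by (simp_all add: add_edge_def)
    next
      assume v: "v = t j"
      show ?thesis
        apply (rule suff[of "r j" "t i"])
            apply (erule V_cases, elim insertE emptyE)
        using u v i(1) j(1) k(1,2) kj uv nE by (simp_all add: add_edge_def)
    next
      assume v: "v = w j"
      show ?thesis
        apply (rule suff[of "t i" "w i"])
            apply (erule V_cases, elim insertE emptyE)
        using u v i(1) j(1) k(1,2) kj uv nE by (simp_all add: add_edge_def)
    next
      assume v: "v = z j"
      show ?thesis using u v i(1) j(1) uv nE by simp
    qed
  next
    assume u: "u = w i"
    from j(2) show ?thesis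
    proof (elim insertE emptyE)
      assume v: "v = r j"
      show ?thesis using u v i(1) j(1) uv nE by simp
    next
      assume v: "v = t j"
      show ?thesis
        apply (rule suff[of "t i" "w i"])
            apply (erule V_cases, elim insertE emptyE)
        using u v i(1) j(1) k(1,2) kj uv nE by (simp_all add: add_edge_def)
    next
      assume v: "v = w j"
      show ?thesis
        apply (rule suff[of "w i" "z j"])
            apply (erule V_cases, elim insertE emptyE)
        using u v i(1) j(1) k(1,2) kj uv nE by (simp_all add: add_edge_def)
    next
      assume v: "v = z j"
      show ?thesis
        apply (rule suff[of "r k" "w i"])
            apply (erule V_cases, elim insertE emptyE)
        using u v i(1) j(1) k(1,2) kj uv nE by (simp_all add: add_edge_def)
    qed
  next
    assume u: "u = z i"
    from j(2) show ?thesis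
    proof (elim insertE emptyE)
      assume v: "v = r j"
      show ?thesis
        apply (rule suff[of "r j" "z i"])
            apply (erule V_cases, elim insertE emptyE)
        using u v i(1) j(1) k(1,2) kj uv nE by (simp_all add: add_edge_def)
    next
      assume v: "v = t j"
      show ?thesis using u v i(1) j(1) uv nE by simp
    next
      assume v: "v = w j"
      show ?thesis
        apply (rule suff[of "r k" "w j"])
            apply (erule V_cases, elim insertE emptyE)
        using u v i(1) j(1) k(1,2) kj uv nE by (simp_all add: add_edge_def)
    next
      assume v: "v = z j"
      show ?thesis using u v i(1) j(1) uv nE by simp
    qed
  qed
qed

lemma conn_V: "connected_graph V E"
  unfolding connected_graph_def
proof
  show "V \<noteq> {}" using inV(1)[OF one(1)] by blast
  have h: "x = r 1 \<or> E x (r 1) \<or> (\<exists>y\<in>V. E x y \<and> E y (r 1))" if x: "x \<in> V" for x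
  proof -
    obtain k where k: "k \<in> I" "x \<in> {r k, t k, w k, z k}" using x by (rule V_cases)
    obtain c where c: "c \<in> I" "c \<noteq> k" using avoid[OF k(1) x] by blast
    have y1: "r 2 \<in> V" "E (r 2) (r 1)" "w c \<in> V" "E (w c) (r 1)" using one c by auto
    from k(2) show ?thesis
    proof (elim insertE emptyE)
      assume xt: "x = t k" show ?thesis
      proof (cases "k = 1")
        case True
        then have "E x (r 2)" using xt one by simp
        then show ?thesis using y1 by blast
      qed (use xt k(1) one in simp)
    next
      assume xz: "x = z k"
      then have "E x (w c)" using k(1) c by simp
      then show ?thesis using y1 by blast
    qed (use k(1) one in auto)
  qed
  show "connected_set E V" by (rule hub_conn[of "r 1"]) (use h one Esym in auto)
qed

lemma conn_del:
  assumes vV: "v \<in> V"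
  shows "connected_graph (V - {v}) (del_vertex_edges E v)"
  unfolding connected_graph_def
proof
  let ?E = "del_vertex_edges E v"
  obtain i where i: "i \<in> I" "v \<in> {r i, t i, w i, z i}" using vV by (rule V_cases)
  obtain b where b: "b \<in> I" "v \<notin> {r b, t b, w b, z b}" using avoid[OF i(1) vV] by blast
  have rb: "r b \<in> V - {v}" using b by auto
  then show "V - {v} \<noteq> {}" by blast
  have h: "x = r b \<or> ?E x (r b) \<or> (\<exists>y\<in>V - {v}. ?E x y \<and> ?E y (r b))" if x: "x \<in> V - {v}" for x
  proof -
    have xV: "x \<in> V" "x \<noteq> v" using x by auto
    obtain k where k: "k \<in> I" "x \<in> {r k, t k, w k, z k}" using xV(1) by (rule V_cases)
    obtain c where c: "c \<in> I" "c \<noteq> b" "v \<notin> {r c, t c, w c, z c}" using avoid[OF b(1) vV] by blast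
    obtain c' where c': "c' \<in> I" "c' \<noteq> k" "v \<notin> {r c', t c', w c', z c'}" using avoid[OF k(1) vV] by blast
    have y1: "r c \<in> V - {v}" "?E (r c) (r b)" "w c' \<in> V - {v}" "?E (w c') (r b)"
      using b c c' by (auto simp: del_vertex_edges_def)
    from k(2) show ?thesis
    proof (elim insertE emptyE)
      assume xr: "x = r k" then show ?thesis
        using xV b k(1) by (cases "k = b") (auto simp: del_vertex_edges_def)
    next
      assume xt: "x = t k" show ?thesis
      proof (cases "k = b")
        case True
        then have "?E x (r c)" using xt xV b c by (auto simp: del_vertex_edges_def)
        then show ?thesis using y1 by blast
      next
        case False then show ?thesis using xt xV b k(1) by (auto simp: del_vertex_edges_def)
      qed
    next
      assume xw: "x = w k" then show ?thesis
        using xV b k(1) by (auto simp: del_vertex_edges_def)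
    next
      assume xz: "x = z k"
      then have "?E x (w c')" using xV c' k(1) by (auto simp: del_vertex_edges_def)
      then show ?thesis using y1 by blast
    qed
  qed
  show "connected_set ?E (V - {v})" by (rule hub_conn[OF rb]) (use h Esym' in auto)
qed

lemma cardV: "card V \<ge> 3"
proof -
  have "{r 1, r 2, r 3} \<subseteq> V" using one by simp
  then have "card {r 1, r 2, r 3} \<le> card V" using finV by (rule card_mono[rotated])
  moreover have "card {r 1, r 2, r 3} = 3" using one by simp
  ultimately show ?thesis by simp
qed

lemma main: "maximal_vertex_critical 3 V E"
  unfolding maximal_vertex_critical_def edge_critical_def vertex_critical_def two_connected_def
proof (intro conjI ballI impI)
  show "gamma_c V E = 3" by (rule gamma3)
  show "gamma_c V E = 3" by (rule gamma3)
  show "3 \<le> card V" by (rule cardV)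
  show "connected_graph V E" by (rule conn_V)
next
  fix v assume "v \<in> V"
  then show "connected_graph (V - {v}) (del_vertex_edges E v)" by (rule conn_del)
next
  fix v assume "v \<in> V"
  then show "gamma_c (V - {v}) (del_vertex_edges E v) < 3" by (rule vc)
next
  fix u v assume "u \<in> V" "v \<in> V" "u \<noteq> v \<and> \<not> E u v"
  then show "gamma_c V (add_edge E u v) < 3" using ec by blast
qed

end

theorem lemma4p8:
  fixes s :: nat and V :: "'a set" and E :: "'a \<Rightarrow> 'a \<Rightarrow> bool"
  assumes "s \<ge> 3" and "in_G3 s V E"
  shows "maximal_vertex_critical 3 V E"
proof -
  from assms(2) obtain r t w z where
    h: "inj_on r {1..s}" "inj_on t {1..s}" "inj_on w {1..s}" "inj_on z {1..s}"
     "r ` {1..s} \<inter> t ` {1..s} = {}" "r ` {1..s} \<inter> w ` {1..s} = {}"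
     "r ` {1..s} \<inter> z ` {1..s} = {}" "t ` {1..s} \<inter> w ` {1..s} = {}"
     "t ` {1..s} \<inter> z ` {1..s} = {}" "w ` {1..s} \<inter> z ` {1..s} = {}"
     "V = r ` {1..s} \<union> t ` {1..s} \<union> w ` {1..s} \<union> z ` {1..s}"
     "\<forall>x y. E x y \<longleftrightarrow> G3_base s r t w z x y \<or> G3_base s r t w z y x"
    unfolding in_G3_def by blast
  have "g3 s V E r t w z"
    using assms(1) h unfolding g3_def by (intro conjI) assumption+
  then interpret g3 s V E r t w z .
  show ?thesis by (rule main)
qed

end
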